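(* Let $a>0$, $0<\alpha<1$, and let $\gamma_1<\dots<\gamma_J$ and $c_1,\dots,c_J$ be as in the context. Let $0<h\le a$ and let $l$ be a positive integer with $l\alpha\le1<(l+1)\alpha$. For any $g\in\mathcal C^{0,l\alpha}[0,h]$ define $w(x):=\sum_{j=1}^J\gamma_jc_jx^{\gamma_j-1}g(x)$ for $0<x\le h$ and $w(0):=0$. Then $w\in\mathcal C^{0,(l+1)\alpha-1}[0,h]$ and \[ \|w\|_{C^{0,(l+1)\alpha-1}[0,h]}\le C\|g\|_{C^{0,l\alpha}[0,h]}, \] where $C$ is a positive constant depending only on $\alpha$, $a$ and $M$.
   Context: Setting: $a>0$, $b>0$, $0<\alpha<1$, $c_0\in\mathbb R$, $n$ a positive integer, $M>0$, $f\in C^n([0,a]\times[c_0-b,c_0+b])$ with all partial derivatives $\partial_x^i\partial_y^jf$, $i+j\le n$, bounded in absolute value by $M$. $\mathbb N=\{0,1,\dots\}$, $m:=\max\{j\in\mathbb N:j<n\alpha\}$; $\gamma_1<\dots<\gamma_J$ enumerate $\{i+j\alpha:i,j\in\mathbb N,\ 0<i+j\alpha<m\}$. $\Lambda_s=\{1,2\}^s$, $\Lambda_0=\{\emptyset\}$, and for $\beta\in\Lambda_s$, $\partial_\beta f:=\partial_{x_{\beta_s}}\cdots\partial_{x_{\beta_1}}f$ with $(x_1,x_2)=(x,y)$, $\partial_\emptyset f=f$. With $\varphi_1\equiv1$, $\varphi_2(t)=\sum_{j=1}^J\gamma_jc_jt^{\gamma_j-1}$, $S(x)=c_0+\sum_jc_jx^{\gamma_j}$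 and $Q(x)=\sum_{s=0}^{n-1}\sum_{\beta\in\Lambda_s}\frac{\partial_\beta f(0,c_0)}{\Gamma(\alpha)}\int_0^x(x-t_0)^{\alpha-1}\int_0^{t_0}\varphi_{\beta_1}(t_1)\cdots\int_0^{t_{s-1}}\varphi_{\beta_s}(t_s)\,dt_s\cdots dt_1\,dt_0$, the reals $c_1,\dots,c_J$ are the unique ones for which $Q-S+c_0$ lies in the span of $\{x^{i+j\alpha}:i,j\in\mathbb N,\ i+j\alpha\ge m\}$. Function spaces: $|v|_{C^{k,\gamma}[0,h]}=\sup_{0\le x<y\le h}|v^{(k)}(x)-v^{(k)}(y)|/(y-x)^\gamma$; $C^{k,\gamma}[0,h]$ = $C^k$ functions with finite seminorm, norm $\max\{\max_{j\le k}\|v^{(j)}\|_\infty,|v|_{C^{k,\gamma}}\}$; $\mathcal C^{k,\gamma}[0,h]$ = those $v$ with $v^{(j)}(0)=0$ for $j=0,\dots,k$. *)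

theory Defs
  imports "HOL-Analysis.Analysis"
begin

definition mA :: "nat \<Rightarrow> real \<Rightarrow> nat" where
  "mA n \<alpha> = (GREATEST j::nat. real j < real n * \<alpha>)"

definition Gams :: "nat \<Rightarrow> real \<Rightarrow> real set" where
  "Gams n \<alpha> = {\<gamma>. \<exists>i j::nat. \<gamma> = real i + real j * \<alpha> \<and> 0 < \<gamma> \<and> \<gamma> < real (mA n \<alpha>)}"

definition phi :: "nat \<Rightarrow> real \<Rightarrow> (real \<Rightarrow> real) \<Rightarrow> nat \<Rightarrow> real \<Rightarrow> real" where
  "phi n \<alpha> c k t = (if k = 1 then 1 else (\<Sum>\<gamma>\<in>Gams n \<alpha>. \<gamma> * c \<gamma> * t powr (\<gamma> - 1)))"

fun iterint :: "(nat \<Rightarrow> real \<Rightarrow> real) \<Rightarrow> nat list \<Rightarrow> real \<Rightarrow> real" where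
  "iterint \<phi> [] t = 1"
| "iterint \<phi> (k # \<beta>) t = integral {0..t} (\<lambda>u. \<phi> k u * iterint \<phi> \<beta> u)"

definition Lam :: "nat \<Rightarrow> nat list set" where
  "Lam s = {\<beta>. length \<beta> = s \<and> set \<beta> \<subseteq> {1,2}}"

text \<open>D beta = partial_beta f, where beta = [beta_1,...,beta_s] and beta_1 is applied first\<close>
definition QA :: "nat \<Rightarrow> real \<Rightarrow> real \<Rightarrow> (nat list \<Rightarrow> real \<times> real \<Rightarrow> real) \<Rightarrow> (real \<Rightarrow> real) \<Rightarrow> real \<Rightarrow> real" where
  "QA n \<alpha> c0 D c x = (\<Sum>s<n. \<Sum>\<beta>\<in>Lam s. D \<beta> (0, c0) / Gamma \<alpha> *
      integral {0..x} (\<lambda>t0. (x - t0) powr (\<alpha> - 1) * iterint (phi n \<alpha> c) \<beta> t0))"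

definition SA :: "nat \<Rightarrow> real \<Rightarrow> real \<Rightarrow> (real \<Rightarrow> real) \<Rightarrow> real \<Rightarrow> real" where
  "SA n \<alpha> c0 c x = c0 + (\<Sum>\<gamma>\<in>Gams n \<alpha>. c \<gamma> * x powr \<gamma>)"

definition coeffs_cond :: "nat \<Rightarrow> real \<Rightarrow> real \<Rightarrow> real \<Rightarrow> (nat list \<Rightarrow> real \<times> real \<Rightarrow> real) \<Rightarrow> (real \<Rightarrow> real) \<Rightarrow> bool" where
  "coeffs_cond n \<alpha> a c0 D c \<longleftrightarrow>
     (\<exists>F d. finite F \<and> F \<subseteq> {p. \<exists>i j::nat. p = real i + real j * \<alpha> \<and> real (mA n \<alpha>) \<le> p} \<and>
        (\<forall>x\<in>{0<..a}. QA n \<alpha> c0 D c x - SA n \<alpha> c0 c x + c0 = (\<Sum>p\<in>F. d p * x powr p)))"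

definition Cn_partials :: "nat \<Rightarrow> real \<Rightarrow> real \<Rightarrow> real \<Rightarrow> (real \<times> real \<Rightarrow> real) \<Rightarrow> (nat list \<Rightarrow> real \<times> real \<Rightarrow> real) \<Rightarrow> bool" where
  "Cn_partials n a b c0 f D \<longleftrightarrow>
     (\<forall>z\<in>{0..a} \<times> {c0-b..c0+b}. D [] z = f z) \<and>
     (\<forall>\<beta>. set \<beta> \<subseteq> {1,2} \<and> length \<beta> \<le> n \<longrightarrow> continuous_on ({0..a} \<times> {c0-b..c0+b}) (D \<beta>)) \<and>
     (\<forall>\<beta>. set \<beta> \<subseteq> {1,2} \<and> length \<beta> < n \<longrightarrow>
        (\<forall>x\<in>{0..a}. \<forall>y\<in>{c0-b..c0+b}.
           ((\<lambda>t. D \<beta> (t, y)) has_real_derivative D (\<beta> @ [1]) (x, y)) (at x within {0..a}) \<and>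
           ((\<lambda>t. D \<beta> (x, t)) has_real_derivative D (\<beta> @ [2]) (x, y)) (at y within {c0-b..c0+b})))"

definition holder_quots :: "real \<Rightarrow> real \<Rightarrow> (real \<Rightarrow> real) \<Rightarrow> real set" where
  "holder_quots \<gamma> h v = (\<lambda>p. \<bar>v (fst p) - v (snd p)\<bar> / (snd p - fst p) powr \<gamma>) `
      {p. 0 \<le> fst p \<and> fst p < snd p \<and> snd p \<le> h}"

definition holder_semi0 :: "real \<Rightarrow> real \<Rightarrow> (real \<Rightarrow> real) \<Rightarrow> real" where
  "holder_semi0 \<gamma> h v = Sup (holder_quots \<gamma> h v)"

definition C0hol :: "real \<Rightarrow> real \<Rightarrow> (real \<Rightarrow> real) set" where
  "C0hol \<gamma> h = {v. continuous_on {0..h} v \<and> bdd_above (holder_quots \<gamma> h v)}"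

definition C0hol_van :: "real \<Rightarrow> real \<Rightarrow> (real \<Rightarrow> real) set" where
  "C0hol_van \<gamma> h = {v \<in> C0hol \<gamma> h. v 0 = 0}"

definition norm0hol :: "real \<Rightarrow> real \<Rightarrow> (real \<Rightarrow> real) \<Rightarrow> real" where
  "norm0hol \<gamma> h v = max (SUP x\<in>{0..h}. \<bar>v x\<bar>) (holder_semi0 \<gamma> h v)"

end

theory Submission
  imports Defs "HOL-Analysis.Analysis"
begin


definition evl :: "(real \<times> real) list \<Rightarrow> real \<Rightarrow> real" where
  "evl xs t = (\<Sum>z\<leftarrow>xs. fst z * t powr snd z)"

definition coef :: "(real \<times> real) list \<Rightarrow> real \<Rightarrow> real" where
  "coef xs q = (\<Sum>z\<leftarrow>xs. if snd z = q then fst z else 0)"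

definition integ :: "(real \<times> real) list \<Rightarrow> (real \<times> real) list" where
  "integ xs = map (\<lambda>z. (fst z / (snd z + 1), snd z + 1)) xs"

definition mul :: "(real \<times> real) list \<Rightarrow> (real \<times> real) list \<Rightarrow> (real \<times> real) list" where
  "mul xs ys = concat (map (\<lambda>z. map (\<lambda>w. (fst z * fst w, snd z + snd w)) ys) xs)"

definition fi :: "real \<Rightarrow> (real \<times> real) list \<Rightarrow> (real \<times> real) list" where
  "fi \<alpha> xs = map (\<lambda>z. (fst z * Beta (snd z + 1) \<alpha>, snd z + \<alpha>)) xs"

lemma evl_Nil[simp]: "evl [] t = 0" and evl_Cons[simp]: "evl (z # xs) t = fst z * t powr snd z + evl xs t"
  and evl_append[simp]: "evl (xs @ ys) t = evl xs t + evl ys t"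
  by (auto simp: evl_def)

lemma coef_Nil[simp]: "coef [] q = 0" and coef_Cons[simp]: "coef (z # xs) q = (if snd z = q then fst z else 0) + coef xs q"
  and coef_append[simp]: "coef (xs @ ys) q = coef xs q + coef ys q"
  by (auto simp: coef_def)

lemma evl_mul: "t > 0 \<Longrightarrow> evl (mul xs ys) t = evl xs t * evl ys t"
proof (induction xs)
  case Nil thus ?case by (simp add: mul_def)
next
  case (Cons z xs)
  have "evl (map (\<lambda>w. (fst z * fst w, snd z + snd w)) ys) t = fst z * t powr snd z * evl ys t"
    by (induction ys) (auto simp: powr_add algebra_simps)
  with Cons show ?case by (simp add: mul_def algebra_simps)
qed

lemma set_mul: "w \<in> set (mul xs ys) \<Longrightarrow> \<exists>z\<in>set xs. \<exists>u\<in>set ys. w = (fst z * fst u, snd z + snd u)"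
  by (auto simp: mul_def)

lemma length_mul: "length (mul xs ys) = length xs * length ys"
  by (induction xs) (auto simp: mul_def)

lemma evl_sum: "finite P \<Longrightarrow> snd ` set xs \<subseteq> P \<Longrightarrow> evl xs t = (\<Sum>p\<in>P. coef xs p * t powr p)"
proof (induction xs)
  case Nil thus ?case by simp
next
  case (Cons z xs)
  have "(\<Sum>p\<in>P. (if snd z = p then fst z else 0) * t powr p) = fst z * t powr snd z"
  proof -
    have "(\<Sum>p\<in>P. (if snd z = p then fst z else 0) * t powr p) = (\<Sum>p\<in>P. (if snd z = p then fst z * t powr p else 0))"
      by (rule sum.cong) auto
    also have "\<dots> = fst z * t powr snd z" using Cons.prems by (simp add: sum.delta)
    finally show ?thesis .
  qed
  with Cons show ?case by (simp add: distrib_right sum.distrib)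
qed

lemma coef_bound: "(\<forall>z\<in>set xs. \<bar>fst z\<bar> \<le> (B::real)) \<Longrightarrow> \<bar>coef xs q\<bar> \<le> real (length xs) * B"
proof (induction xs)
  case Nil thus ?case by simp
next
  case (Cons z xs)
  then have "\<bar>coef xs q\<bar> \<le> real (length xs) * B" by simp
  moreover have "\<bar>(if snd z = q then fst z else 0)\<bar> \<le> B" using Cons.prems by (auto intro: order_trans[OF _ abs_ge_zero])
  ultimately show ?case by (simp add: algebra_simps)
qed

lemma coef_zero: "(\<forall>z\<in>set xs. snd z \<noteq> q) \<Longrightarrow> coef xs q = 0"
  by (induction xs) auto

lemma integ_append[simp]: "integ (xs @ ys) = integ xs @ integ ys"
  by (simp add: integ_def)
lemma fi_append[simp]: "fi \<alpha> (xs @ ys) = fi \<alpha> xs @ fi \<alpha> ys"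
  by (simp add: fi_def)

lemma has_integral_evl:
  assumes "\<forall>z\<in>set xs. snd z > -1" "t \<ge> 0"
  shows "((\<lambda>u. evl xs u) has_integral evl (integ xs) t) {0..t}"
  using assms
proof (induction xs)
  case Nil thus ?case by (simp add: integ_def)
next
  case (Cons z xs)
  have "((\<lambda>u. u powr snd z) has_integral (t powr (snd z + 1) / (snd z + 1))) {0..t}"
    using Cons.prems by (intro has_integral_powr_from_0) auto
  then have "((\<lambda>u. fst z * u powr snd z) has_integral fst z * (t powr (snd z + 1) / (snd z + 1))) {0..t}"
    using has_integral_mult_right by blast
  from has_integral_add[OF this Cons.IH] Cons.prems show ?case by (simp add: integ_def)
qed

lemma integral_rep:
  assumes "\<forall>u>0. f u = evl xs u" "\<forall>z\<in>set xs. snd z > -1" "t \<ge> 0"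
  shows "integral {0..t} f = evl (integ xs) t"
proof -
  have "(f has_integral evl (integ xs) t) {0..t}"
    by (rule has_integral_spike_finite[of "{0}", OF _ _ has_integral_evl[OF assms(2,3)]]) (use assms(1) in auto)
  thus ?thesis by (rule integral_unique)
qed



lemma fi_base:
  fixes p x \<alpha> :: real
  assumes p: "p > -1" and x: "x > 0" and al: "\<alpha> > 0"
  shows "((\<lambda>t. (x - t) powr (\<alpha> - 1) * t powr p) has_integral (Beta (p + 1) \<alpha> * x powr (p + \<alpha>))) {0..x}"
proof -
  have B: "((\<lambda>s. s powr (p + 1 - 1) * (1 - s) powr (\<alpha> - 1)) has_integral Beta (p + 1) \<alpha>) (cbox 0 1)"
    using has_integral_Beta_real[of "p+1" \<alpha>] p al by simp
  have "((\<lambda>t. (t /\<^sub>R x) powr (p + 1 - 1) * (1 - t /\<^sub>R x) powr (\<alpha> - 1)) has_integral (Beta (p + 1) \<alpha> /\<^sub>R (1/x) ^ DIM(real)))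
           (cbox ((0 - 0) /\<^sub>R (1/x)) ((1 - 0) /\<^sub>R (1/x)))"
    using has_integral_affinity'[OF B, of "1/x" 0] x by (simp add: divide_inverse_commute)
  then have I: "((\<lambda>t. (t / x) powr p * (1 - t / x) powr (\<alpha> - 1)) has_integral (Beta (p + 1) \<alpha> * x)) {0..x}"
    using x by (simp add: divide_inverse_commute mult.commute)
  have eq: "(x - t) powr (\<alpha> - 1) * t powr p = x powr (p + \<alpha> - 1) * ((t / x) powr p * (1 - t / x) powr (\<alpha> - 1))"
    if "t \<in> {0..x}" for t
  proof -
    have "1 - t / x = (x - t) / x" using x by (simp add: field_simps)
    then have "(t / x) powr p * (1 - t / x) powr (\<alpha> - 1) = (t powr p / x powr p) * ((x - t) powr (\<alpha> - 1) / x powr (\<alpha> - 1))"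
      using that x by (simp add: powr_divide)
    also have "x powr (p + \<alpha> - 1) * \<dots> = (x - t) powr (\<alpha> - 1) * t powr p"
    proof -
      have "x powr (p + \<alpha> - 1) = x powr p * x powr (\<alpha> - 1)" by (simp add: powr_add[symmetric] add_diff_eq)
      moreover have "x powr p > 0" "x powr (\<alpha> - 1) > 0" using x by auto
      ultimately show ?thesis by (simp add: field_simps)
    qed
    finally show ?thesis by simp
  qed
  have "((\<lambda>t. x powr (p + \<alpha> - 1) * ((t / x) powr p * (1 - t / x) powr (\<alpha> - 1))) has_integral (x powr (p + \<alpha> - 1) * (Beta (p + 1) \<alpha> * x))) {0..x}"
    using has_integral_mult_right[OF I] by blast
  moreover have "x powr (p + \<alpha> - 1) * (Beta (p + 1) \<alpha> * x) = Beta (p + 1) \<alpha> * x powr (p + \<alpha>)"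
    using x by (simp add: powr_add powr_diff field_simps)
  ultimately show ?thesis using has_integral_cong[of "{0..x}", OF eq] by simp
qed

lemma has_integral_fi:
  assumes "\<forall>z\<in>set xs. snd z > -1" "x > 0" "\<alpha> > 0"
  shows "((\<lambda>t. (x - t) powr (\<alpha> - 1) * evl xs t) has_integral evl (fi \<alpha> xs) x) {0..x}"
  using assms
proof (induction xs)
  case Nil thus ?case by (simp add: fi_def)
next
  case (Cons z xs)
  have "((\<lambda>t. fst z * ((x - t) powr (\<alpha> - 1) * t powr snd z)) has_integral fst z * (Beta (snd z + 1) \<alpha> * x powr (snd z + \<alpha>))) {0..x}"
    using Cons.prems by (intro has_integral_mult_right fi_base) auto
  from has_integral_add[OF this Cons.IH] Cons.prems show ?case
    by (simp add: fi_def algebra_simps)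
qed

lemma integral_fi_rep:
  assumes "\<forall>u>0. f u = evl xs u" "\<forall>z\<in>set xs. snd z > -1" "x > 0" "\<alpha> > 0"
  shows "integral {0..x} (\<lambda>t. (x - t) powr (\<alpha> - 1) * f t) = evl (fi \<alpha> xs) x"
proof -
  have "((\<lambda>t. (x - t) powr (\<alpha> - 1) * f t) has_integral evl (fi \<alpha> xs) x) {0..x}"
    by (rule has_integral_spike_finite[of "{0}", OF _ _ has_integral_fi[OF assms(2,3,4)]]) (use assms(1) in auto)
  thus ?thesis by (rule integral_unique)
qed

lemma lin_indep:
  fixes e :: "real \<Rightarrow> real"
  assumes "finite P" "a > 0" "\<forall>x\<in>{0<..a}. (\<Sum>p\<in>P. e p * x powr p) = 0"
  shows "\<forall>p\<in>P. e p = 0"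
  using assms
proof (induction "card P" arbitrary: P rule: less_induct)
  case less
  show ?case
  proof (cases "P = {}")
    case True thus ?thesis by simp
  next
    case False
    define p0 where "p0 = Min P"
    have p0: "p0 \<in> P" "\<forall>p\<in>P. p0 \<le> p" using False less.prems(1) by (auto simp: p0_def)
    have lim: "((\<lambda>x. \<Sum>p\<in>P. e p * x powr (p - p0)) \<longlongrightarrow> (\<Sum>p\<in>P. if p = p0 then e p else 0)) (at_right 0)"
    proof (rule tendsto_sum)
      fix p assume pP: "p \<in> P"
      show "((\<lambda>x. e p * x powr (p - p0)) \<longlongrightarrow> (if p = p0 then e p else 0)) (at_right 0)"
      proof (cases "p = p0")
        case True
        have "\<forall>\<^sub>F x in at_right (0::real). e p = e p * x powr (p - p0)"
          using True by (auto simp: eventually_at_right_less eventually_at_right_field intro!: exI[of _ 1])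
        then show ?thesis using True by (simp add: tendsto_eventually  eventually_at_right_field)
      next
        case False
        then have "p - p0 > 0" "p0 < p" using p0 pP by force+
        have "((\<lambda>x. x powr (p - p0)) \<longlongrightarrow> 0) (at_right (0::real))"
          by (rule tendsto_zero_powrI) (auto intro: tendsto_ident_at eventually_at_right_less exI[of _ 1] simp: \<open>p0 < p\<close> eventually_at_right_field)
        then show ?thesis using False tendsto_mult_right_zero by auto
      qed
    qed
    have ev: "\<forall>\<^sub>F x in at_right (0::real). (\<Sum>p\<in>P. e p * x powr (p - p0)) = 0"
    proof -
      have "\<forall>\<^sub>F x in at_right (0::real). x \<in> {0<..a}"
        using less.prems(2) by (auto simp: eventually_at_right_field intro!: exI[of _ a])
      then show ?thesis
      proof (rule eventually_mono)
        fix x :: real assume x: "x \<in> {0<..a}"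
        have "(\<Sum>p\<in>P. e p * x powr (p - p0)) = (\<Sum>p\<in>P. e p * x powr p) / x powr p0"
          using x by (simp add: sum_divide_distrib powr_diff)
        also have "\<dots> = 0" using less.prems(3) x by simp
        finally show "(\<Sum>p\<in>P. e p * x powr (p - p0)) = 0" .
      qed
    qed
    have "(\<Sum>p\<in>P. if p = p0 then e p else 0) = 0"
      using tendsto_unique[OF trivial_limit_at_right_real lim tendsto_eventually[OF ev]] by simp
    then have e0: "e p0 = 0" using p0 less.prems(1) by (simp add: sum.delta')
    have "\<forall>p\<in>P - {p0}. e p = 0"
    proof (rule less.hyps)
      show "card (P - {p0}) < card P" using p0 less.prems(1) by (metis card_Diff1_less)
      show "\<forall>x\<in>{0<..a}. (\<Sum>p\<in>P - {p0}. e p * x powr p) = 0"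
        using less.prems(3) p0(1) less.prems(1) e0 by (simp add: sum.remove)
    qed (use less.prems in auto)
    with e0 show ?thesis by blast
  qed
qed



lemma Gams_finite:
  assumes "\<alpha> > 0"
  shows "finite (Gams n \<alpha>)"
proof -
  define m where "m = mA n \<alpha>"
  have "Gams n \<alpha> \<subseteq> (\<lambda>(i,j). real i + real j * \<alpha>) ` ({..m} \<times> {..nat \<lceil>real m / \<alpha>\<rceil>})"
  proof
    fix g assume "g \<in> Gams n \<alpha>"
    then obtain i j :: nat where g: "g = real i + real j * \<alpha>" "0 < g" "g < real m"
      by (auto simp: Gams_def m_def)
    have "real i \<le> g" using g assms by auto
    then have "i \<le> m" using g by linarith
    have "real j * \<alpha> \<le> g" using g by auto
    then have "real j \<le> real m / \<alpha>" using g assms by (simp add: field_simps)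
    then have "j \<le> nat \<lceil>real m / \<alpha>\<rceil>" by linarith
    with \<open>i \<le> m\<close> g show "g \<in> (\<lambda>(i,j). real i + real j * \<alpha>) ` ({..m} \<times> {..nat \<lceil>real m / \<alpha>\<rceil>})"
      by force
  qed
  thus ?thesis by (rule finite_subset) auto
qed

lemma Gams_ge:
  assumes "\<alpha> > 0" "\<alpha> < 1" "g \<in> Gams n \<alpha>"
  shows "\<alpha> \<le> g" "g < real (mA n \<alpha>)"
proof -
  from assms obtain i j :: nat where g: "g = real i + real j * \<alpha>" "0 < g" "g < real (mA n \<alpha>)"
    by (auto simp: Gams_def)
  show "g < real (mA n \<alpha>)" using g by simp
  show "\<alpha> \<le> g"
  proof (cases "i = 0")
    case True
    then have "j \<ge> 1" using g by (cases j) auto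
    then have "real j * \<alpha> \<ge> 1 * \<alpha>" using assms by (intro mult_right_mono) auto
    then show ?thesis using g True by simp
  next
    case False
    then show ?thesis using g assms by (simp add: add_increasing2)
  qed
qed

definition lowL :: "nat \<Rightarrow> real \<Rightarrow> (real \<Rightarrow> real) \<Rightarrow> real \<Rightarrow> (real \<times> real) list" where
  "lowL n \<alpha> c \<gamma> = map (\<lambda>g. (g * c g, g - 1)) (sorted_list_of_set {g\<in>Gams n \<alpha>. g < \<gamma>})"
definition highL :: "nat \<Rightarrow> real \<Rightarrow> (real \<Rightarrow> real) \<Rightarrow> real \<Rightarrow> (real \<times> real) list" where
  "highL n \<alpha> c \<gamma> = map (\<lambda>g. (g * c g, g - 1)) (sorted_list_of_set {g\<in>Gams n \<alpha>. \<not> g < \<gamma>})"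

lemma phi_split:
  assumes "\<alpha> > 0" "k \<noteq> 1"
  shows "phi n \<alpha> c k u = evl (lowL n \<alpha> c \<gamma>) u + evl (highL n \<alpha> c \<gamma>) u"
proof -
  have fin: "finite (Gams n \<alpha>)" using Gams_finite assms by blast
  have e: "evl (map (\<lambda>g. (g * c g, g - 1)) (sorted_list_of_set S)) u = (\<Sum>g\<in>S. g * c g * u powr (g - 1))"
    if "finite S" for S
    using that by (simp add: evl_def o_def sum_list_distinct_conv_sum_set)
  have "(\<Sum>g\<in>Gams n \<alpha>. g * c g * u powr (g - 1)) =
    (\<Sum>g\<in>{g\<in>Gams n \<alpha>. g < \<gamma>}. g * c g * u powr (g - 1)) + (\<Sum>g\<in>{g\<in>Gams n \<alpha>. \<not> g < \<gamma>}. g * c g * u powr (g - 1))"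
  proof -
    have d: "{g\<in>Gams n \<alpha>. g < \<gamma>} \<inter> {g\<in>Gams n \<alpha>. \<not> g < \<gamma>} = {}" by auto
    have u: "Gams n \<alpha> = {g\<in>Gams n \<alpha>. g < \<gamma>} \<union> {g\<in>Gams n \<alpha>. \<not> g < \<gamma>}" by auto
    show ?thesis using sum.union_disjoint[OF _ _ d, of "\<lambda>g. g * c g * u powr (g - 1)"] fin u by simp
  qed
  then show ?thesis using assms fin
    by (simp add: phi_def lowL_def highL_def e)
qed

lemma lowL_props:
  assumes "\<alpha> > 0" "\<alpha> < 1" "z \<in> set (lowL n \<alpha> c \<gamma>)"
  shows "\<exists>g\<in>Gams n \<alpha>. g < \<gamma> \<and> z = (g * c g, g - 1)"
  using assms Gams_finite[OF assms(1), of n] by (auto simp: lowL_def)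

lemma highL_props:
  assumes "\<alpha> > 0" "\<alpha> < 1" "z \<in> set (highL n \<alpha> c \<gamma>)"
  shows "\<exists>g\<in>Gams n \<alpha>. \<gamma> \<le> g \<and> z = (g * c g, g - 1)"
  using assms Gams_finite[OF assms(1), of n] by (auto simp: highL_def)

lemma length_lowL: "\<alpha> > 0 \<Longrightarrow> length (lowL n \<alpha> c \<gamma>) \<le> card (Gams n \<alpha>)"
  unfolding lowL_def using Gams_finite[of \<alpha> n] by (simp add: card_mono)



lemma iterint_split:
  assumes al: "0 < \<alpha>" "\<alpha> < 1" and gp: "\<gamma> > 0" and K: "K \<ge> 0"
    and cb: "\<forall>g\<in>Gams n \<alpha>. g < \<gamma> \<longrightarrow> \<bar>g * c g\<bar> \<le> K"
  shows "\<exists>A B. (\<forall>u>0. iterint (phi n \<alpha> c) \<beta> u = evl A u + evl B u) \<and>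
     (\<forall>z\<in>set A. snd z \<ge> 0 \<and> \<bar>fst z\<bar> \<le> (max 1 (K / \<alpha>)) ^ length \<beta>) \<and>
     length A \<le> (card (Gams n \<alpha>) + 1) ^ length \<beta> \<and> (\<forall>z\<in>set B. snd z \<ge> \<gamma>)"
proof (induction \<beta>)
  case Nil
  show ?case by (rule exI[of _ "[(1,0)]"], rule exI[of _ "[]"]) auto
next
  case (Cons k \<beta>)
  define K1 where "K1 = max 1 (K / \<alpha>)"
  define N1 where "N1 = card (Gams n \<alpha>) + 1"
  from Cons.IH obtain A B where AB: "\<forall>u>0. iterint (phi n \<alpha> c) \<beta> u = evl A u + evl B u"
    "\<forall>z\<in>set A. snd z \<ge> 0 \<and> \<bar>fst z\<bar> \<le> K1 ^ length \<beta>" "length A \<le> N1 ^ length \<beta>" "\<forall>z\<in>set B. snd z \<ge> \<gamma>"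
    unfolding K1_def N1_def by blast
  have K1: "K1 \<ge> 1" by (simp add: K1_def)
  have N1: "N1 \<ge> 1" by (simp add: N1_def)
  show ?case
  proof (cases "k = 1")
    case True
    show ?thesis
    proof (intro exI conjI)
      show "\<forall>u>0. iterint (phi n \<alpha> c) (k # \<beta>) u = evl (integ A) u + evl (integ B) u"
      proof (intro allI impI)
        fix u :: real assume u: "u > 0"
        have "iterint (phi n \<alpha> c) (k # \<beta>) u = integral {0..u} (\<lambda>v. iterint (phi n \<alpha> c) \<beta> v)"
          using True by (simp add: phi_def)
        also have "\<dots> = evl (integ (A @ B)) u"
        proof (rule integral_rep)
          show "\<forall>v>0. iterint (phi n \<alpha> c) \<beta> v = evl (A @ B) v" using AB(1) by simp
          show "\<forall>z\<in>set (A @ B). - 1 < snd z"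
          proof
            fix z assume "z \<in> set (A @ B)"
            then show "- 1 < snd z" using AB(2) AB(4) gp by (auto; fastforce)
          qed
        qed (use u in simp)
        finally show "iterint (phi n \<alpha> c) (k # \<beta>) u = evl (integ A) u + evl (integ B) u" by simp
      qed
      show "\<forall>z\<in>set (integ A). 0 \<le> snd z \<and> \<bar>fst z\<bar> \<le> max 1 (K / \<alpha>) ^ length (k # \<beta>)"
      proof
        fix z assume "z \<in> set (integ A)"
        then obtain w where w: "w \<in> set A" "z = (fst w / (snd w + 1), snd w + 1)" by (auto simp: integ_def)
        have s1: "snd w + 1 \<ge> 1" using AB(2) w(1) by auto
        have "\<bar>fst w / (snd w + 1)\<bar> = \<bar>fst w\<bar> / (snd w + 1)" using s1 by simp
        also have "\<dots> \<le> \<bar>fst w\<bar>" using s1 mult_left_mono[of 1 "snd w + 1" "\<bar>fst w\<bar>"] by (simp add: divide_le_eq)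
        also have "\<dots> \<le> K1 ^ length \<beta>" using AB(2) w(1) by auto
        also have "\<dots> \<le> K1 ^ length (k # \<beta>)" using K1 by simp
        finally show "0 \<le> snd z \<and> \<bar>fst z\<bar> \<le> max 1 (K / \<alpha>) ^ length (k # \<beta>)"
          using w AB(2) by (auto simp: K1_def)
      qed
      show "length (integ A) \<le> (card (Gams n \<alpha>) + 1) ^ length (k # \<beta>)"
        using AB(3) power_increasing[of "length \<beta>" "Suc (length \<beta>)" N1] N1 by (simp add: integ_def N1_def)
      show "\<forall>z\<in>set (integ B). \<gamma> \<le> snd z" using AB(4) by (auto simp: integ_def)
    qed
  next
    case False
    define L where "L = lowL n \<alpha> c \<gamma>"
    define H where "H = highL n \<alpha> c \<gamma>"
    have Lp: "\<forall>z\<in>set L. snd z \<ge> \<alpha> - 1 \<and> \<bar>fst z\<bar> \<le> K \<and> snd z + 1 \<ge> \<alpha>"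
    proof
      fix z assume "z \<in> set L"
      then obtain g where g: "g \<in> Gams n \<alpha>" "g < \<gamma>" "z = (g * c g, g - 1)"
        using lowL_props[OF al] unfolding L_def by blast
      have "\<alpha> \<le> g" using Gams_ge[OF al g(1)] by simp
      then show "snd z \<ge> \<alpha> - 1 \<and> \<bar>fst z\<bar> \<le> K \<and> snd z + 1 \<ge> \<alpha>" using g cb by simp
    qed
    have Hp: "\<forall>z\<in>set H. snd z \<ge> \<gamma> - 1"
    proof
      fix z assume "z \<in> set H"
      then obtain g where g: "g \<in> Gams n \<alpha>" "\<gamma> \<le> g" "z = (g * c g, g - 1)"
        using highL_props[OF al] unfolding H_def by blast
      then show "snd z \<ge> \<gamma> - 1" by simp
    qed
    define B' where "B' = mul L B @ mul H A @ mul H B"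
    show ?thesis
    proof (intro exI conjI)
      show "\<forall>u>0. iterint (phi n \<alpha> c) (k # \<beta>) u = evl (integ (mul L A)) u + evl (integ B') u"
      proof (intro allI impI)
        fix u :: real assume u: "u > 0"
        have "iterint (phi n \<alpha> c) (k # \<beta>) u = integral {0..u} (\<lambda>v. phi n \<alpha> c k v * iterint (phi n \<alpha> c) \<beta> v)"
          by simp
        also have "\<dots> = evl (integ (mul L A @ B')) u"
        proof (rule integral_rep)
          show "\<forall>v>0. phi n \<alpha> c k v * iterint (phi n \<alpha> c) \<beta> v = evl (mul L A @ B') v"
          proof (intro allI impI)
            fix v :: real assume v: "v > 0"
            have "phi n \<alpha> c k v * iterint (phi n \<alpha> c) \<beta> v = (evl L v + evl H v) * (evl A v + evl B v)"
              using AB(1) v phi_split[OF al(1) False] unfolding L_def H_def by simp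
            also have "\<dots> = evl (mul L A @ B') v"
              using v by (simp add: B'_def evl_mul distrib_left distrib_right)
            finally show "phi n \<alpha> c k v * iterint (phi n \<alpha> c) \<beta> v = evl (mul L A @ B') v" .
          qed
          show "\<forall>z\<in>set (mul L A @ B'). - 1 < snd z"
          proof
            fix z assume "z \<in> set (mul L A @ B')"
            then consider "z \<in> set (mul L A)" | "z \<in> set (mul L B)" | "z \<in> set (mul H A)" | "z \<in> set (mul H B)"
              unfolding B'_def by auto
            then show "- 1 < snd z"
            proof cases
              case 1 then obtain x y where "x \<in> set L" "y \<in> set A" "z = (fst x * fst y, snd x + snd y)" by (auto dest!: set_mul)
              then show ?thesis using Lp AB(2) al by force
            next
              case 2 then obtain x y where "x \<in> set L" "y \<in> set B" "z = (fst x * fst y, snd x + snd y)" by (auto dest!: set_mul)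
              then show ?thesis using Lp AB(4) al gp by force
            next
              case 3 then obtain x y where "x \<in> set H" "y \<in> set A" "z = (fst x * fst y, snd x + snd y)" by (auto dest!: set_mul)
              then show ?thesis using Hp AB(2) al gp by force
            next
              case 4 then obtain x y where "x \<in> set H" "y \<in> set B" "z = (fst x * fst y, snd x + snd y)" by (auto dest!: set_mul)
              then show ?thesis using Hp AB(4) al gp by force
            qed
          qed
        qed (use u in auto)
        finally show "iterint (phi n \<alpha> c) (k # \<beta>) u = evl (integ (mul L A)) u + evl (integ B') u" by simp
      qed
      show "\<forall>z\<in>set (integ (mul L A)). 0 \<le> snd z \<and> \<bar>fst z\<bar> \<le> max 1 (K / \<alpha>) ^ length (k # \<beta>)"
      proof
        fix z assume "z \<in> set (integ (mul L A))"
        then obtain w where w: "w \<in> set (mul L A)" "z = (fst w / (snd w + 1), snd w + 1)" by (auto simp: integ_def)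
        then obtain x y where xy: "x \<in> set L" "y \<in> set A" "w = (fst x * fst y, snd x + snd y)"
          by (auto dest!: set_mul)
        have s: "snd w + 1 \<ge> \<alpha>" using xy Lp AB(2) by fastforce
        have "\<bar>fst w / (snd w + 1)\<bar> = \<bar>fst x\<bar> * \<bar>fst y\<bar> / (snd w + 1)"
          using s al xy by (simp add: abs_mult)
        also have "\<dots> \<le> K * K1 ^ length \<beta> / \<alpha>"
          using s al xy Lp AB(2) K K1 by (intro frac_le mult_mono) auto
        also have "\<dots> = (K / \<alpha>) * K1 ^ length \<beta>" by simp
        also have "\<dots> \<le> K1 * K1 ^ length \<beta>" using K1 by (intro mult_right_mono) (auto simp: K1_def)
        finally show "0 \<le> snd z \<and> \<bar>fst z\<bar> \<le> max 1 (K / \<alpha>) ^ length (k # \<beta>)"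
          using w s al by (auto simp: K1_def)
      qed
      show "length (integ (mul L A)) \<le> (card (Gams n \<alpha>) + 1) ^ length (k # \<beta>)"
      proof -
        have "length (integ (mul L A)) = length L * length A" by (simp add: integ_def length_mul)
        also have "\<dots> \<le> N1 * N1 ^ length \<beta>"
          using length_lowL[OF al(1), of n c \<gamma>] AB(3) unfolding L_def N1_def by (intro mult_mono) auto
        finally show ?thesis by (simp add: N1_def)
      qed
      show "\<forall>z\<in>set (integ B'). \<gamma> \<le> snd z"
      proof
        fix z assume "z \<in> set (integ B')"
        then obtain w where w: "w \<in> set B'" "z = (fst w / (snd w + 1), snd w + 1)" by (auto simp: integ_def)
        then consider "w \<in> set (mul L B)" | "w \<in> set (mul H A)" | "w \<in> set (mul H B)"
          unfolding B'_def by auto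
        then have "snd w + 1 \<ge> \<gamma>"
        proof cases
          case 1 then obtain x y where "x \<in> set L" "y \<in> set B" "w = (fst x * fst y, snd x + snd y)" by (auto dest!: set_mul)
          then show ?thesis using Lp AB(4) al by force
        next
          case 2 then obtain x y where "x \<in> set H" "y \<in> set A" "w = (fst x * fst y, snd x + snd y)" by (auto dest!: set_mul)
          then show ?thesis using Hp AB(2) by force
        next
          case 3 then obtain x y where "x \<in> set H" "y \<in> set B" "w = (fst x * fst y, snd x + snd y)" by (auto dest!: set_mul)
          then show ?thesis using Hp AB(4) gp by force
        qed
        then show "\<gamma> \<le> snd z" using w by simp
      qed
    qed
  qed
qed



definition admc :: "nat \<Rightarrow> real \<Rightarrow> real \<Rightarrow> real \<Rightarrow> (real \<Rightarrow> real) \<Rightarrow> bool" where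
  "admc n \<alpha> a M c \<longleftrightarrow> (\<exists>D c0. (\<forall>s<n. \<forall>\<beta>\<in>Lam s. \<bar>D \<beta> (0, c0)\<bar> \<le> M) \<and> coeffs_cond n \<alpha> a c0 D c)"

lemma Lam_finite: "finite (Lam s)"
proof -
  have "Lam s = {xs. set xs \<subseteq> {1,2} \<and> length xs = s}" by (auto simp: Lam_def)
  thus ?thesis using finite_lists_length_eq[of "{1::nat,2}" s] by simp
qed

lemma sum_if_restrict:
  fixes f :: "real \<Rightarrow> real"
  assumes "finite P" "S \<subseteq> P"
  shows "(\<Sum>p\<in>P. (if p \<in> S then f p else 0) * x powr p) = (\<Sum>p\<in>S. f p * x powr p)"
proof -
  have "(\<Sum>p\<in>P. (if p \<in> S then f p else 0) * x powr p) = (\<Sum>p\<in>P. if p \<in> S then f p * x powr p else 0)"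
    by (rule sum.cong) auto
  also have "\<dots> = (\<Sum>p\<in>P \<inter> S. f p * x powr p)" using assms(1) by (simp add: sum.inter_restrict)
  also have "P \<inter> S = S" using assms(2) by auto
  finally show ?thesis .
qed

lemma Beta_pos: "a > 0 \<Longrightarrow> b > 0 \<Longrightarrow> Beta a b > (0::real)"
  by (simp add: Beta_def)

lemma step_bound:
  assumes al: "0 < \<alpha>" "\<alpha> < 1" and a: "a > 0" and g: "\<gamma> \<in> Gams n \<alpha>" and K: "K \<ge> 0"
  shows "\<exists>K'. \<forall>c. admc n \<alpha> a M c \<and> (\<forall>g\<in>Gams n \<alpha>. g < \<gamma> \<longrightarrow> \<bar>c g\<bar> \<le> K) \<longrightarrow> \<bar>c \<gamma>\<bar> \<le> K'"
proof -
  define K2 where "K2 = real (mA n \<alpha>) * K"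
  define K1 where "K1 = max 1 (K2 / \<alpha>)"
  define N1 where "N1 = real (card (Gams n \<alpha>) + 1)"
  define bnd where "bnd = (\<lambda>s::nat. M / Gamma \<alpha> * (N1 ^ s * (K1 ^ s * Beta 1 \<alpha>)))"
  have fin: "finite (Gams n \<alpha>)" using Gams_finite al by blast
  have K1ge: "K1 \<ge> 1" by (simp add: K1_def)
  have gpos: "\<gamma> > 0" "\<gamma> < real (mA n \<alpha>)" using Gams_ge[OF al g] al by auto
  show ?thesis
  proof (rule exI[of _ "\<Sum>s<n. real (card (Lam s)) * bnd s"], intro allI impI)
    fix c assume "admc n \<alpha> a M c \<and> (\<forall>g\<in>Gams n \<alpha>. g < \<gamma> \<longrightarrow> \<bar>c g\<bar> \<le> K)"
    then obtain D c0 F d where DM: "\<forall>s<n. \<forall>\<beta>\<in>Lam s. \<bar>D \<beta> (0, c0)\<bar> \<le> M"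
      and F: "finite F" "F \<subseteq> {p. \<exists>i j::nat. p = real i + real j * \<alpha> \<and> real (mA n \<alpha>) \<le> p}"
      and eq: "\<forall>x\<in>{0<..a}. QA n \<alpha> c0 D c x - SA n \<alpha> c0 c x + c0 = (\<Sum>p\<in>F. d p * x powr p)"
      and cK: "\<forall>g\<in>Gams n \<alpha>. g < \<gamma> \<longrightarrow> \<bar>c g\<bar> \<le> K"
      unfolding admc_def coeffs_cond_def by blast
    have cK2: "\<forall>g\<in>Gams n \<alpha>. g < \<gamma> \<longrightarrow> \<bar>g * c g\<bar> \<le> K2"
    proof (intro ballI impI)
      fix g assume "g \<in> Gams n \<alpha>" "g < \<gamma>"
      then have "0 < g" "g < real (mA n \<alpha>)" "\<bar>c g\<bar> \<le> K" using Gams_ge[OF al] al cK by force+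
      then show "\<bar>g * c g\<bar> \<le> K2" unfolding K2_def abs_mult using K
        by (intro mult_mono) auto
    qed
    have K2: "K2 \<ge> 0" using K by (simp add: K2_def)
    have "\<forall>\<beta>. \<exists>A B. (\<forall>u>0. iterint (phi n \<alpha> c) \<beta> u = evl A u + evl B u) \<and>
     (\<forall>z\<in>set A. snd z \<ge> 0 \<and> \<bar>fst z\<bar> \<le> K1 ^ length \<beta>) \<and>
     length A \<le> N1 ^ length \<beta> \<and> (\<forall>z\<in>set B. snd z \<ge> \<gamma>)"
    proof
      fix \<beta> :: "nat list"
      from iterint_split[OF al gpos(1) K2 cK2, of \<beta>] obtain A B where
        "(\<forall>u>0. iterint (phi n \<alpha> c) \<beta> u = evl A u + evl B u)"
        "(\<forall>z\<in>set A. snd z \<ge> 0 \<and> \<bar>fst z\<bar> \<le> K1 ^ length \<beta>)"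
        "length A \<le> (card (Gams n \<alpha>) + 1) ^ length \<beta>" "(\<forall>z\<in>set B. snd z \<ge> \<gamma>)"
        unfolding K1_def by blast
      moreover have "real (length A) \<le> N1 ^ length \<beta>"
        using calculation(3) unfolding N1_def by (metis of_nat_le_iff of_nat_power)
      ultimately show "\<exists>A B. (\<forall>u>0. iterint (phi n \<alpha> c) \<beta> u = evl A u + evl B u) \<and>
        (\<forall>z\<in>set A. snd z \<ge> 0 \<and> \<bar>fst z\<bar> \<le> K1 ^ length \<beta>) \<and>
        length A \<le> N1 ^ length \<beta> \<and> (\<forall>z\<in>set B. snd z \<ge> \<gamma>)" by blast
    qed
    then obtain AA BB where AB: "\<And>\<beta>. \<forall>u>0. iterint (phi n \<alpha> c) \<beta> u = evl (AA \<beta>) u + evl (BB \<beta>) u"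
      "\<And>\<beta>. \<forall>z\<in>set (AA \<beta>). snd z \<ge> 0 \<and> \<bar>fst z\<bar> \<le> K1 ^ length \<beta>"
      "\<And>\<beta>. length (AA \<beta>) \<le> N1 ^ length \<beta>" "\<And>\<beta>. \<forall>z\<in>set (BB \<beta>). snd z \<ge> \<gamma>"
      by metis
    define q where "q = (\<lambda>\<beta> p. coef (fi \<alpha> (AA \<beta>)) p + coef (fi \<alpha> (BB \<beta>)) p)"
    define P where "P = (\<Union>s<n. \<Union>\<beta>\<in>Lam s. snd ` set (fi \<alpha> (AA \<beta>)) \<union> snd ` set (fi \<alpha> (BB \<beta>))) \<union> Gams n \<alpha> \<union> F"
    have finP: "finite P" unfolding P_def using fin F(1) Lam_finite by auto
    define E where "E = (\<lambda>p. (\<Sum>s<n. \<Sum>\<beta>\<in>Lam s. D \<beta> (0, c0) / Gamma \<alpha> * q \<beta> p)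
        - (if p \<in> Gams n \<alpha> then c p else 0) - (if p \<in> F then d p else 0))"
    have Qrep: "QA n \<alpha> c0 D c x = (\<Sum>p\<in>P. (\<Sum>s<n. \<Sum>\<beta>\<in>Lam s. D \<beta> (0, c0) / Gamma \<alpha> * q \<beta> p) * x powr p)"
      if x: "x \<in> {0<..a}" for x
    proof -
      have "QA n \<alpha> c0 D c x = (\<Sum>s<n. \<Sum>\<beta>\<in>Lam s. D \<beta> (0, c0) / Gamma \<alpha> * (\<Sum>p\<in>P. q \<beta> p * x powr p))"
        unfolding QA_def
      proof (intro sum.cong refl)
        fix s \<beta> assume s: "s \<in> {..<n}" and b: "\<beta> \<in> Lam s"
        have "integral {0..x} (\<lambda>t0. (x - t0) powr (\<alpha> - 1) * iterint (phi n \<alpha> c) \<beta> t0) = evl (fi \<alpha> (AA \<beta> @ BB \<beta>)) x"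
        proof (rule integral_fi_rep)
          show "\<forall>u>0. iterint (phi n \<alpha> c) \<beta> u = evl (AA \<beta> @ BB \<beta>) u" using AB(1) by simp
          show "\<forall>z\<in>set (AA \<beta> @ BB \<beta>). - 1 < snd z"
          proof
            fix z assume "z \<in> set (AA \<beta> @ BB \<beta>)"
            then show "- 1 < snd z" using AB(2)[of \<beta>] AB(4)[of \<beta>] gpos by (auto; fastforce)
          qed
        qed (use x al in auto)
        also have "\<dots> = (\<Sum>p\<in>P. q \<beta> p * x powr p)"
        proof -
          have "snd ` set (fi \<alpha> (AA \<beta>)) \<subseteq> P" "snd ` set (fi \<alpha> (BB \<beta>)) \<subseteq> P"
            unfolding P_def using s b by blast+
          then show ?thesis
            by (simp add: evl_sum[OF finP] q_def distrib_right sum.distrib)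
        qed
        finally show "D \<beta> (0, c0) / Gamma \<alpha> * integral {0..x} (\<lambda>t0. (x - t0) powr (\<alpha> - 1) * iterint (phi n \<alpha> c) \<beta> t0)
             = D \<beta> (0, c0) / Gamma \<alpha> * (\<Sum>p\<in>P. q \<beta> p * x powr p)" by simp
      qed
      also have "\<dots> = (\<Sum>s<n. \<Sum>\<beta>\<in>Lam s. \<Sum>p\<in>P. D \<beta> (0, c0) / Gamma \<alpha> * q \<beta> p * x powr p)"
        by (simp add: sum_distrib_left mult.assoc)
      also have "\<dots> = (\<Sum>p\<in>P. \<Sum>s<n. \<Sum>\<beta>\<in>Lam s. D \<beta> (0, c0) / Gamma \<alpha> * q \<beta> p * x powr p)"
        by (simp add: sum.swap[of _ P] sum.swap[of _ _ "Lam _"])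
      also have "\<dots> = (\<Sum>p\<in>P. (\<Sum>s<n. \<Sum>\<beta>\<in>Lam s. D \<beta> (0, c0) / Gamma \<alpha> * q \<beta> p) * x powr p)"
        by (simp add: sum_distrib_right)
      finally show ?thesis .
    qed
    have zero: "\<forall>x\<in>{0<..a}. (\<Sum>p\<in>P. E p * x powr p) = 0"
    proof
      fix x :: real assume x: "x \<in> {0<..a}"
      have GP: "Gams n \<alpha> \<subseteq> P" "F \<subseteq> P" unfolding P_def by auto
      have "(\<Sum>p\<in>P. E p * x powr p) = QA n \<alpha> c0 D c x
         - (\<Sum>p\<in>P. (if p \<in> Gams n \<alpha> then c p else 0) * x powr p) - (\<Sum>p\<in>P. (if p \<in> F then d p else 0) * x powr p)"
        unfolding E_def Qrep[OF x] by (simp add: left_diff_distrib sum_subtractf)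
      also have "\<dots> = QA n \<alpha> c0 D c x - (SA n \<alpha> c0 c x - c0) - (\<Sum>p\<in>F. d p * x powr p)"
        using sum_if_restrict[OF finP GP(1), of c x] sum_if_restrict[OF finP GP(2), of d x]
        by (simp add: SA_def)
      also have "\<dots> = 0"
      proof -
        have "QA n \<alpha> c0 D c x - SA n \<alpha> c0 c x + c0 = (\<Sum>p\<in>F. d p * x powr p)" using eq x by blast
        then show ?thesis by linarith
      qed
      finally show "(\<Sum>p\<in>P. E p * x powr p) = 0" .
    qed
    have "E \<gamma> = 0" using lin_indep[OF finP a zero] g unfolding P_def by blast
    moreover have "\<gamma> \<notin> F" using F(2) gpos by force
    moreover have "coef (fi \<alpha> (BB \<beta>)) \<gamma> = 0" for \<beta>
    proof (rule coef_zero, rule ballI)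
      fix z assume "z \<in> set (fi \<alpha> (BB \<beta>))"
      then obtain w where "w \<in> set (BB \<beta>)" "snd z = snd w + \<alpha>" by (auto simp: fi_def)
      then show "snd z \<noteq> \<gamma>" using AB(4)[of \<beta>] al by force
    qed
    ultimately have cg: "c \<gamma> = (\<Sum>s<n. \<Sum>\<beta>\<in>Lam s. D \<beta> (0, c0) / Gamma \<alpha> * coef (fi \<alpha> (AA \<beta>)) \<gamma>)"
      using g unfolding E_def q_def by simp
    have tb: "\<bar>D \<beta> (0, c0) / Gamma \<alpha> * coef (fi \<alpha> (AA \<beta>)) \<gamma>\<bar> \<le> bnd s" if s: "s < n" and b: "\<beta> \<in> Lam s" for s \<beta>
    proof -
      have lb: "length \<beta> = s" using b by (simp add: Lam_def)
      have Gp: "Gamma \<alpha> > 0" using al by simp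
      have cb: "\<forall>z\<in>set (fi \<alpha> (AA \<beta>)). \<bar>fst z\<bar> \<le> K1 ^ s * Beta 1 \<alpha>"
      proof
        fix z assume "z \<in> set (fi \<alpha> (AA \<beta>))"
        then obtain w where w: "w \<in> set (AA \<beta>)" "z = (fst w * Beta (snd w + 1) \<alpha>, snd w + \<alpha>)" by (auto simp: fi_def)
        have w0: "snd w \<ge> 0" "\<bar>fst w\<bar> \<le> K1 ^ s" using AB(2)[of \<beta>] w(1) lb by auto
        have "Beta (snd w + 1) \<alpha> \<le> Beta 1 \<alpha>" using w0 al by (intro Beta_real_mono) auto
        moreover have "Beta (snd w + 1) \<alpha> > 0" using w0 al by (intro Beta_pos) auto
        moreover have "\<bar>fst z\<bar> = \<bar>fst w\<bar> * Beta (snd w + 1) \<alpha>" using w(2) calculation(2) by (simp add: abs_mult)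
        moreover have "\<bar>fst w\<bar> * Beta (snd w + 1) \<alpha> \<le> K1 ^ s * Beta 1 \<alpha>"
          by (rule mult_mono) (use w0 calculation K1ge in auto)
        ultimately show "\<bar>fst z\<bar> \<le> K1 ^ s * Beta 1 \<alpha>" by simp
      qed
      have "\<bar>coef (fi \<alpha> (AA \<beta>)) \<gamma>\<bar> \<le> real (length (fi \<alpha> (AA \<beta>))) * (K1 ^ s * Beta 1 \<alpha>)"
        by (rule coef_bound[OF cb])
      also have "\<dots> \<le> N1 ^ s * (K1 ^ s * Beta 1 \<alpha>)"
        using AB(3)[of \<beta>] lb Beta_pos[of 1 \<alpha>] al by (intro mult_right_mono) (auto simp: fi_def K1_def)
      finally have c1: "\<bar>coef (fi \<alpha> (AA \<beta>)) \<gamma>\<bar> \<le> N1 ^ s * (K1 ^ s * Beta 1 \<alpha>)" .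
      have "\<bar>D \<beta> (0, c0) / Gamma \<alpha>\<bar> \<le> M / Gamma \<alpha>" using DM s b Gp by (simp add: divide_right_mono)
      moreover have "0 \<le> M / Gamma \<alpha>" using calculation by (meson abs_ge_zero order_trans)
      ultimately show ?thesis unfolding bnd_def abs_mult using c1 
        by (intro mult_mono) auto
    qed
    have "\<bar>c \<gamma>\<bar> \<le> (\<Sum>s<n. \<Sum>\<beta>\<in>Lam s. \<bar>D \<beta> (0, c0) / Gamma \<alpha> * coef (fi \<alpha> (AA \<beta>)) \<gamma>\<bar>)"
      unfolding cg by (rule order_trans[OF sum_abs sum_mono]) (rule sum_abs)
    also have "\<dots> \<le> (\<Sum>s<n. \<Sum>\<beta>\<in>Lam s. bnd s)"
      using tb by (intro sum_mono) auto
    also have "\<dots> = (\<Sum>s<n. real (card (Lam s)) * bnd s)" by simp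
    finally show "\<bar>c \<gamma>\<bar> \<le> (\<Sum>s<n. real (card (Lam s)) * bnd s)" .
  qed
qed

lemma all_bound:
  assumes al: "0 < \<alpha>" "\<alpha> < 1" and a: "a > 0"
  shows "\<exists>K\<ge>0. \<forall>c. admc n \<alpha> a M c \<longrightarrow> (\<forall>g\<in>Gams n \<alpha>. \<bar>c g\<bar> \<le> K)"
proof -
  have fin: "finite (Gams n \<alpha>)" using Gams_finite al by blast
  have main: "\<forall>\<gamma>. card {g\<in>Gams n \<alpha>. g < \<gamma>} \<le> k \<longrightarrow>
      (\<exists>K\<ge>0. \<forall>c. admc n \<alpha> a M c \<longrightarrow> (\<forall>g\<in>Gams n \<alpha>. g < \<gamma> \<longrightarrow> \<bar>c g\<bar> \<le> K))" for k
  proof (induction k)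
    case 0
    show ?case
    proof (intro allI impI)
      fix \<gamma> :: real assume "card {g\<in>Gams n \<alpha>. g < \<gamma>} \<le> 0"
      then have "{g\<in>Gams n \<alpha>. g < \<gamma>} = {}" using fin by simp
      then show "\<exists>K\<ge>0. \<forall>c. admc n \<alpha> a M c \<longrightarrow> (\<forall>g\<in>Gams n \<alpha>. g < \<gamma> \<longrightarrow> \<bar>c g\<bar> \<le> K)" by auto
    qed
  next
    case (Suc k)
    show ?case
    proof (intro allI impI)
      fix \<gamma> :: real assume cs: "card {g\<in>Gams n \<alpha>. g < \<gamma>} \<le> Suc k"
      define S where "S = {g\<in>Gams n \<alpha>. g < \<gamma>}"
      have finS: "finite S" using fin by (simp add: S_def)
      show "\<exists>K\<ge>0. \<forall>c. admc n \<alpha> a M c \<longrightarrow> (\<forall>g\<in>Gams n \<alpha>. g < \<gamma> \<longrightarrow> \<bar>c g\<bar> \<le> K)"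
      proof (cases "S = {}")
        case True then show ?thesis unfolding S_def by auto
      next
        case False
        define g0 where "g0 = Max S"
        have g0: "g0 \<in> S" "\<forall>g\<in>S. g \<le> g0" using False finS by (auto simp: g0_def)
        have S0: "{g\<in>Gams n \<alpha>. g < g0} = S - {g0}" using g0 by (auto simp: S_def)
        have "card {g\<in>Gams n \<alpha>. g < g0} \<le> k" unfolding S0 using cs g0 finS
          by (simp add: S_def[symmetric])
        with Suc.IH obtain K0 where K0: "K0 \<ge> 0" "\<forall>c. admc n \<alpha> a M c \<longrightarrow> (\<forall>g\<in>Gams n \<alpha>. g < g0 \<longrightarrow> \<bar>c g\<bar> \<le> K0)"
          by blast
        have g0G: "g0 \<in> Gams n \<alpha>" using g0 by (simp add: S_def)
        from step_bound[OF al a g0G K0(1), where M=M] obtain K' where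
          K': "\<forall>c. admc n \<alpha> a M c \<and> (\<forall>g\<in>Gams n \<alpha>. g < g0 \<longrightarrow> \<bar>c g\<bar> \<le> K0) \<longrightarrow> \<bar>c g0\<bar> \<le> K'" by blast
        show ?thesis
        proof (rule exI[of _ "max K0 K'"], intro conjI allI impI ballI)
          show "0 \<le> max K0 K'" using K0 by simp
          fix c g assume c: "admc n \<alpha> a M c" and gG: "g \<in> Gams n \<alpha>" and gl: "g < \<gamma>"
          have "g \<in> S" using gG gl by (simp add: S_def)
          then consider "g < g0" | "g = g0" using g0 by force
          then show "\<bar>c g\<bar> \<le> max K0 K'"
          proof cases
            case 1 then show ?thesis using K0 c gG by force
          next
            case 2 then show ?thesis using K' K0 c by force
          qed
        qed
      qed
    qed
  qed
  obtain K where K: "K \<ge> 0" "\<forall>c. admc n \<alpha> a M c \<longrightarrow> (\<forall>g\<in>Gams n \<alpha>. g < real (mA n \<alpha>) \<longrightarrow> \<bar>c g\<bar> \<le> K)"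
    using main[of "card {g\<in>Gams n \<alpha>. g < real (mA n \<alpha>)}"] by blast
  show ?thesis using K Gams_ge[OF al] by blast
qed



lemma pow_shift:
  fixes t A p q P :: real
  assumes "0 \<le> t" "t \<le> A" "1 \<le> A" "0 < q" "q \<le> p" "p \<le> P"
  shows "t powr p \<le> A powr P * t powr q"
proof (cases "t = 0")
  case True thus ?thesis using assms by simp
next
  case False
  then have t: "t > 0" using assms by simp
  have "t powr p = t powr (p - q) * t powr q" by (simp add: powr_add[symmetric])
  also have "t powr (p - q) \<le> A powr (p - q)" using assms by (intro powr_mono2) auto
  also have "A powr (p - q) \<le> A powr P" using assms by (intro powr_mono) auto
  finally show ?thesis using t by (simp add: mult_right_mono)
qed

lemma mvt_bound:
  fixes x y e :: real
  assumes "0 < x" "x < y" "y \<le> 2 * x"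
  shows "\<bar>y powr e - x powr e\<bar> \<le> \<bar>e\<bar> * 2 powr (\<bar>e\<bar> + 1) * x powr (e - 1) * (y - x)"
proof -
  have "\<exists>z. x < z \<and> z < y \<and> y powr e - x powr e = (y - x) * (e * z powr (e - 1))"
    by (rule MVT2[OF assms(2)]) (use assms in \<open>auto intro: has_real_derivative_powr\<close>)
  then obtain z where z: "x < z" "z < y" "y powr e - x powr e = (y - x) * (e * z powr (e - 1))" by blast
  have zb: "z powr (e - 1) \<le> 2 powr (\<bar>e\<bar> + 1) * x powr (e - 1)"
  proof (cases "e - 1 \<ge> 0")
    case True
    have "z powr (e - 1) \<le> (2 * x) powr (e - 1)" using z assms True by (intro powr_mono2) auto
    also have "\<dots> = 2 powr (e - 1) * x powr (e - 1)" using assms by (simp add: powr_mult)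
    also have "2 powr (e - 1) \<le> 2 powr (\<bar>e\<bar> + 1)" by (intro powr_mono) auto
    finally show ?thesis using assms by (simp add: mult_right_mono)
  next
    case False
    have "z powr (e - 1) \<le> x powr (e - 1)" using z assms False by (intro powr_mono2') auto
    also have "\<dots> \<le> 2 powr (\<bar>e\<bar> + 1) * x powr (e - 1)"
    proof -
      have "1 \<le> 2 powr (\<bar>e\<bar> + 1)" by (simp add: ge_one_powr_ge_zero)
      then show ?thesis using assms by (simp add: mult_le_cancel_right1)
    qed
    finally show ?thesis .
  qed
  have "\<bar>y powr e - x powr e\<bar> = (y - x) * (\<bar>e\<bar> * z powr (e - 1))" using z by (simp add: abs_mult)
  also have "\<dots> \<le> (y - x) * (\<bar>e\<bar> * (2 powr (\<bar>e\<bar> + 1) * x powr (e - 1)))"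
    using zb assms by (intro mult_left_mono) auto
  finally show ?thesis by (simp add: algebra_simps)
qed



lemma term_holder:
  fixes e a h \<beta> \<delta> G :: real and g :: "real \<Rightarrow> real"
  assumes a: "a > 0" "0 < h" "h \<le> a" "0 < \<beta>" "\<beta> \<le> 1" "0 < \<delta>" "\<delta> \<le> \<beta>" "\<delta> \<le> \<beta> + e" "e > -1" "G \<ge> 0" "g 0 = 0"
    and gh: "\<forall>x y. 0 \<le> x \<and> x < y \<and> y \<le> h \<longrightarrow> \<bar>g y - g x\<bar> \<le> G * (y - x) powr \<beta>"
  defines "U \<equiv> (\<lambda>t. if t = 0 then 0 else t powr e * g t)"
    and "Z \<equiv> max 1 a powr (\<bar>e\<bar> + 1)"
  defines "C \<equiv> (2 powr (\<bar>e\<bar> + 1) + 1) * Z + Z * Z + \<bar>e\<bar> * 2 powr (\<bar>e\<bar> + 1) * (Z * Z)"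
  shows "(\<forall>x y. 0 \<le> x \<and> x < y \<and> y \<le> h \<longrightarrow> \<bar>U y - U x\<bar> \<le> C * G * (y - x) powr \<delta>) \<and>
         (\<forall>t. 0 \<le> t \<and> t \<le> h \<longrightarrow> \<bar>U t\<bar> \<le> C * G)"
proof -
  define A where "A = max 1 a"
  define P where "P = \<bar>e\<bar> + 1"
  have A1: "1 \<le> A" and hA: "h \<le> A" using a by (auto simp: A_def)
  have Z1: "1 \<le> Z" unfolding Z_def using A1 by (simp add: A_def ge_one_powr_ge_zero)
  have Zdef: "Z = A powr P" by (simp add: Z_def A_def P_def)
  have P2: "2 powr P \<ge> 1" by (simp add: P_def ge_one_powr_ge_zero)
  have gb: "\<bar>g t\<bar> \<le> G * t powr \<beta>" if "0 \<le> t" "t \<le> h" for t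
  proof (cases "t = 0")
    case True then show ?thesis using a by simp
  next
    case False then show ?thesis using gh[rule_format, of 0 t] that a by simp
  qed
  have Ub: "\<bar>U t\<bar> \<le> G * t powr (e + \<beta>)" if "0 \<le> t" "t \<le> h" for t
  proof (cases "t = 0")
    case True then show ?thesis using a by (simp add: U_def)
  next
    case False
    then have "\<bar>U t\<bar> = t powr e * \<bar>g t\<bar>" using that by (simp add: U_def abs_mult)
    also have "\<dots> \<le> t powr e * (G * t powr \<beta>)" using gb that by (intro mult_left_mono) auto
    also have "\<dots> = G * t powr (e + \<beta>)" by (simp add: powr_add)
    finally show ?thesis .
  qed
  have CZ: "Z \<le> C" "Z * Z \<le> C"
    using Z1 P2 unfolding C_def P_def[symmetric]
    by (auto intro!: add_increasing add_increasing2 mult_nonneg_nonneg simp: algebra_simps)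
  have diff: "\<bar>U y - U x\<bar> \<le> C * G * (y - x) powr \<delta>" if xy: "0 \<le> x" "x < y" "y \<le> h" for x y
  proof -
    define d where "d = y - x"
    have d: "0 < d" "d \<le> h" "d \<le> A" using xy hA by (auto simp: d_def)
    have sh: "d powr (e + \<beta>) \<le> Z * d powr \<delta>"
      unfolding Zdef using d A1 a by (intro pow_shift) (auto simp: P_def)
    have dpos: "d powr \<delta> \<ge> 0" by simp
    show ?thesis
    proof (cases "y > 2 * x")
      case True
      have "y powr (e + \<beta>) \<le> (2 * d) powr (e + \<beta>)" using True xy a by (intro powr_mono2) (auto simp: d_def)
      also have "(2 * d) powr (e + \<beta>) = 2 powr (e + \<beta>) * d powr (e + \<beta>)" using d by (simp add: powr_mult)
      also have "2 powr (e + \<beta>) \<le> 2 powr P" using a by (intro powr_mono) (auto simp: P_def)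
      finally have "y powr (e + \<beta>) \<le> 2 powr P * d powr (e + \<beta>)" by (simp add: mult_right_mono)
      then have uy: "\<bar>U y\<bar> \<le> G * (2 powr P * d powr (e + \<beta>))" using Ub[of y] xy a
        by (meson mult_left_mono order_trans less_imp_le)
      have "x powr (e + \<beta>) \<le> d powr (e + \<beta>)" using True xy a by (intro powr_mono2) (auto simp: d_def)
      then have ux: "\<bar>U x\<bar> \<le> G * d powr (e + \<beta>)" using Ub[of x] xy a
        by (meson mult_left_mono order_trans less_imp_le)
      have "\<bar>U y - U x\<bar> \<le> (2 powr P + 1) * G * d powr (e + \<beta>)" using uy ux by (simp add: algebra_simps)
      also have "\<dots> \<le> (2 powr P + 1) * G * (Z * d powr \<delta>)" using sh a P2 by (intro mult_left_mono) auto
      also have "\<dots> = ((2 powr P + 1) * Z) * G * d powr \<delta>" by (simp add: algebra_simps)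
      also have "\<dots> \<le> C * G * d powr \<delta>"
      proof -
        have "(2 powr P + 1) * Z \<le> C" using Z1 P2 unfolding C_def P_def[symmetric]
          by (auto intro!: add_increasing2 mult_nonneg_nonneg)
        then show ?thesis using a dpos by (intro mult_right_mono) auto
      qed
      finally show ?thesis by (simp add: d_def)
    next
      case False
      then have x0: "x > 0" "y \<le> 2 * x" "d \<le> x" using xy by (auto simp: d_def)
      have split: "U y - U x = y powr e * (g y - g x) + (y powr e - x powr e) * g x"
        using x0 xy by (simp add: U_def algebra_simps)
      have gd: "\<bar>g y - g x\<bar> \<le> G * d powr \<beta>" using gh xy by (simp add: d_def)
      have T1: "\<bar>y powr e * (g y - g x)\<bar> \<le> Z * Z * G * d powr \<delta>"
      proof (cases "e \<ge> 0")
        case True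
        have "y powr e \<le> A powr e" using True xy hA by (intro powr_mono2) auto
        also have "\<dots> \<le> Z" unfolding Zdef using A1 by (intro powr_mono) (auto simp: P_def)
        finally have ye: "y powr e \<le> Z" .
        have "d powr \<beta> \<le> Z * d powr \<delta>" unfolding Zdef using d A1 a by (intro pow_shift) (auto simp: P_def)
        then have gd2: "\<bar>g y - g x\<bar> \<le> G * (Z * d powr \<delta>)" using gd a by (meson mult_left_mono order_trans)
        have "\<bar>y powr e * (g y - g x)\<bar> = y powr e * \<bar>g y - g x\<bar>" by (simp add: abs_mult)
        also have "\<dots> \<le> Z * (G * (Z * d powr \<delta>))" using ye gd2 Z1 by (intro mult_mono) auto
        finally show ?thesis by (simp add: algebra_simps)
      next
        case False
        have "y powr e \<le> x powr e" using False xy x0 by (intro powr_mono2') auto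
        also have "\<dots> \<le> d powr e" using False x0 d by (intro powr_mono2') auto
        finally have ye: "y powr e \<le> d powr e" .
        have "\<bar>y powr e * (g y - g x)\<bar> = y powr e * \<bar>g y - g x\<bar>" by (simp add: abs_mult)
        also have "\<dots> \<le> d powr e * (G * d powr \<beta>)" using ye gd by (intro mult_mono) auto
        also have "\<dots> = G * d powr (e + \<beta>)" by (simp add: powr_add)
        also have "\<dots> \<le> G * (Z * d powr \<delta>)" using sh a by (intro mult_left_mono) auto
        also have "\<dots> \<le> G * (Z * (Z * d powr \<delta>))" using Z1 a dpos
          by (intro mult_left_mono) (auto simp: mult_le_cancel_right1)
        finally show ?thesis by (simp add: algebra_simps)
      qed
      have W: "x powr (e - 1 + \<beta>) * d \<le> Z * Z * d powr \<delta>"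
      proof (cases "e - 1 + \<beta> \<le> 0")
        case True
        have "x powr (e - 1 + \<beta>) \<le> d powr (e - 1 + \<beta>)" using True x0 d by (intro powr_mono2') auto
        then have "x powr (e - 1 + \<beta>) * d \<le> d powr (e - 1 + \<beta>) * d" using d by (simp add: mult_right_mono)
        also have "\<dots> = d powr (e - 1 + \<beta>) * d powr 1" using d by simp
        also have "\<dots> = d powr (e + \<beta>)" by (simp only: powr_add[symmetric]) (simp add: algebra_simps)
        also have "\<dots> \<le> Z * d powr \<delta>" by (rule sh)
        also have "\<dots> \<le> Z * Z * d powr \<delta>" using Z1 dpos by (simp add: mult_le_cancel_right1 mult_right_mono)
        finally show ?thesis .
      next
        case False
        have "x powr (e - 1 + \<beta>) \<le> A powr (e - 1 + \<beta>)" using False x0 xy hA by (intro powr_mono2) auto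
        also have "\<dots> \<le> Z" unfolding Zdef using A1 a by (intro powr_mono) (auto simp: P_def)
        finally have xe: "x powr (e - 1 + \<beta>) \<le> Z" .
        have "d powr 1 \<le> Z * d powr \<delta>" unfolding Zdef using d A1 a by (intro pow_shift) (auto simp: P_def)
        then have dd: "d \<le> Z * d powr \<delta>" using d by simp
        have "x powr (e - 1 + \<beta>) * d \<le> Z * (Z * d powr \<delta>)" using xe dd Z1 d by (intro mult_mono) auto
        then show ?thesis by (simp add: algebra_simps)
      qed
      have T2: "\<bar>(y powr e - x powr e) * g x\<bar> \<le> \<bar>e\<bar> * 2 powr P * (Z * Z) * G * d powr \<delta>"
      proof -
        have m: "\<bar>y powr e - x powr e\<bar> \<le> \<bar>e\<bar> * 2 powr P * x powr (e - 1) * d"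
          using mvt_bound[OF x0(1) xy(2) x0(2), of e] by (simp add: P_def d_def)
        have gx: "\<bar>g x\<bar> \<le> G * x powr \<beta>" using gb xy by simp
        have "\<bar>(y powr e - x powr e) * g x\<bar> \<le> (\<bar>e\<bar> * 2 powr P * x powr (e - 1) * d) * (G * x powr \<beta>)"
          unfolding abs_mult using m gx by (intro mult_mono) auto
        also have "\<dots> = \<bar>e\<bar> * 2 powr P * G * (x powr (e - 1 + \<beta>) * d)"
        proof -
          have xp: "x powr (e - 1 + \<beta>) = x powr (e - 1) * x powr \<beta>" by (rule powr_add)
          show ?thesis unfolding xp by (simp only: ac_simps)
        qed
        also have "\<dots> \<le> \<bar>e\<bar> * 2 powr P * G * (Z * Z * d powr \<delta>)"
          using W a by (intro mult_left_mono) auto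
        finally show ?thesis by (simp add: algebra_simps)
      qed
      have "\<bar>U y - U x\<bar> \<le> Z * Z * G * d powr \<delta> + \<bar>e\<bar> * 2 powr P * (Z * Z) * G * d powr \<delta>"
        unfolding split using T1 T2 abs_triangle_ineq[of "y powr e * (g y - g x)" "(y powr e - x powr e) * g x"] by linarith
      also have "\<dots> = (Z * Z + \<bar>e\<bar> * 2 powr P * (Z * Z)) * G * d powr \<delta>" by (simp add: algebra_simps)
      also have "\<dots> \<le> C * G * d powr \<delta>"
      proof -
        have "Z * Z + \<bar>e\<bar> * 2 powr P * (Z * Z) \<le> C" using Z1 P2 unfolding C_def P_def[symmetric]
          by (auto intro!: add_increasing mult_nonneg_nonneg)
        then show ?thesis using a dpos by (intro mult_right_mono) auto
      qed
      finally show ?thesis by (simp add: d_def)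
    qed
  qed
  have sup: "\<bar>U t\<bar> \<le> C * G" if "0 \<le> t" "t \<le> h" for t
  proof -
    have "t powr (e + \<beta>) \<le> A powr (e + \<beta>)" using that hA a by (intro powr_mono2) auto
    also have "\<dots> \<le> Z" unfolding Zdef using A1 a by (intro powr_mono) (auto simp: P_def)
    finally have "t powr (e + \<beta>) \<le> C" using CZ by simp
    then have "G * t powr (e + \<beta>) \<le> G * C" using a by (intro mult_left_mono) auto
    then show ?thesis using Ub[OF that] by (simp add: mult.commute)
  qed
  show ?thesis using diff sup by blast
qed



definition Cterm :: "real \<Rightarrow> real \<Rightarrow> real" where
  "Cterm a e = (2 powr (\<bar>e\<bar> + 1) + 1) * (max 1 a powr (\<bar>e\<bar> + 1)) + (max 1 a powr (\<bar>e\<bar> + 1)) * (max 1 a powr (\<bar>e\<bar> + 1))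
     + \<bar>e\<bar> * 2 powr (\<bar>e\<bar> + 1) * ((max 1 a powr (\<bar>e\<bar> + 1)) * (max 1 a powr (\<bar>e\<bar> + 1)))"

lemma Cterm_nonneg: "Cterm a e \<ge> 0"
  unfolding Cterm_def by (intro add_nonneg_nonneg mult_nonneg_nonneg) auto

lemma holder_cont:
  fixes v :: "real \<Rightarrow> real"
  assumes d: "\<delta> > 0" and K: "K \<ge> 0"
    and hb: "\<forall>x y. 0 \<le> x \<and> x < y \<and> y \<le> h \<longrightarrow> \<bar>v y - v x\<bar> \<le> K * (y - x) powr \<delta>"
  shows "continuous_on {0..h} v"
  unfolding continuous_on_iff
proof (intro ballI allI impI)
  fix x e :: real assume x: "x \<in> {0..h}" and e: "0 < e"
  define r where "r = (e / (K + 1)) powr (1 / \<delta>)"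
  have r: "r > 0" using e K by (simp add: r_def)
  have rd: "r powr \<delta> = e / (K + 1)" using e K d by (simp add: r_def powr_powr)
  show "\<exists>d>0. \<forall>x'\<in>{0..h}. dist x' x < d \<longrightarrow> dist (v x') (v x) < e"
  proof (rule exI[of _ r], intro conjI ballI impI)
    show "r > 0" by (rule r)
    fix x' assume x': "x' \<in> {0..h}" and dx: "dist x' x < r"
    show "dist (v x') (v x) < e"
    proof (cases "x' = x")
      case True then show ?thesis using e by simp
    next
      case False
      define u where "u = \<bar>x' - x\<bar>"
      have u: "u > 0" "u < r" using False dx by (auto simp: u_def dist_real_def)
      have b: "\<bar>v x' - v x\<bar> \<le> K * u powr \<delta>"
      proof (cases "x < x'")
        case True then show ?thesis using hb x x' by (auto simp: u_def)
      next
        case False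
        then have "x' < x" using \<open>x' \<noteq> x\<close> by simp
        then show ?thesis using hb[rule_format, of x' x] x x' by (auto simp: u_def abs_minus_commute)
      qed
      have "u powr \<delta> < r powr \<delta>" using u d by (intro powr_less_mono2) auto
      then have "u powr \<delta> < e / (K + 1)" using rd by simp
      then have "(K + 1) * u powr \<delta> < e" using K by (simp add: less_divide_eq algebra_simps)
      moreover have "K * u powr \<delta> \<le> (K + 1) * u powr \<delta>" by (simp add: mult_right_mono)
      ultimately show ?thesis using b by (simp add: dist_real_def)
    qed
  qed
qed

lemma w_result:
  fixes \<alpha> a h :: real and l n :: nat and g c :: "real \<Rightarrow> real"
  assumes al: "0 < \<alpha>" "\<alpha> < 1" and a: "0 < a" and h: "0 < h" "h \<le> a" and l: "0 < l"
    "real l * \<alpha> \<le> 1" "1 < real (l + 1) * \<alpha>"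
    and g: "g \<in> C0hol_van (real l * \<alpha>) h" and Kc: "Kc \<ge> 0" and cK: "\<forall>\<gamma>\<in>Gams n \<alpha>. \<bar>c \<gamma>\<bar> \<le> Kc"
  shows "let w = (\<lambda>x. if x = 0 then 0 else (\<Sum>\<gamma>\<in>Gams n \<alpha>. \<gamma> * c \<gamma> * x powr (\<gamma> - 1)) * g x)
         in w \<in> C0hol_van (real (l + 1) * \<alpha> - 1) h \<and>
            norm0hol (real (l + 1) * \<alpha> - 1) h w \<le> (1 + (\<Sum>\<gamma>\<in>Gams n \<alpha>. \<gamma> * Kc * Cterm a (\<gamma> - 1))) * norm0hol (real l * \<alpha>) h g"
proof -
  define \<beta> where "\<beta> = real l * \<alpha>"
  define \<delta> where "\<delta> = real (l + 1) * \<alpha> - 1"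
  define S0 where "S0 = (\<Sum>\<gamma>\<in>Gams n \<alpha>. \<gamma> * Kc * Cterm a (\<gamma> - 1))"
  define G where "G = norm0hol \<beta> h g"
  define w where "w = (\<lambda>x. if x = 0 then 0 else (\<Sum>\<gamma>\<in>Gams n \<alpha>. \<gamma> * c \<gamma> * x powr (\<gamma> - 1)) * g x)"
  define U where "U = (\<lambda>\<gamma> t. if t = 0 then 0 else t powr (\<gamma> - 1) * g t)"
  have fin: "finite (Gams n \<alpha>)" using Gams_finite al by blast
  have \<beta>: "0 < \<beta>" "\<beta> \<le> 1" using l al by (auto simp: \<beta>_def)
  have \<delta>: "0 < \<delta>" "\<delta> \<le> \<beta>" "\<delta> = \<beta> + \<alpha> - 1" using l al by (auto simp: \<delta>_def \<beta>_def algebra_simps)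
  have gc: "continuous_on {0..h} g" "bdd_above (holder_quots \<beta> h g)" "g 0 = 0"
    using g by (auto simp: C0hol_van_def C0hol_def \<beta>_def)
  have qg: "\<bar>g x - g y\<bar> / (y - x) powr \<beta> \<le> G" if "0 \<le> x" "x < y" "y \<le> h" for x y
  proof -
    have "\<bar>g x - g y\<bar> / (y - x) powr \<beta> \<in> holder_quots \<beta> h g"
      unfolding holder_quots_def using that by (auto intro!: image_eqI[of _ _ "(x, y)"])
    then have "\<bar>g x - g y\<bar> / (y - x) powr \<beta> \<le> holder_semi0 \<beta> h g"
      unfolding holder_semi0_def by (rule cSup_upper[OF _ gc(2)])
    then show ?thesis unfolding G_def norm0hol_def by linarith
  qed
  have G0: "G \<ge> 0" using qg[of 0 h] h by (meson abs_ge_zero divide_nonneg_nonneg order_trans powr_ge_zero order_refl)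
  have gh: "\<forall>x y. 0 \<le> x \<and> x < y \<and> y \<le> h \<longrightarrow> \<bar>g y - g x\<bar> \<le> G * (y - x) powr \<beta>"
  proof (intro allI impI)
    fix x y assume xy: "0 \<le> x \<and> x < y \<and> y \<le> h"
    have p: "(y - x) powr \<beta> > 0" using xy by simp
    have "\<bar>g x - g y\<bar> / (y - x) powr \<beta> \<le> G" using qg xy by blast
    then have "\<bar>g x - g y\<bar> \<le> G * (y - x) powr \<beta>" using p by (simp add: divide_le_eq)
    then show "\<bar>g y - g x\<bar> \<le> G * (y - x) powr \<beta>" by (simp add: abs_minus_commute)
  qed
  have TH: "(\<forall>x y. 0 \<le> x \<and> x < y \<and> y \<le> h \<longrightarrow> \<bar>U \<gamma> y - U \<gamma> x\<bar> \<le> Cterm a (\<gamma> - 1) * G * (y - x) powr \<delta>) \<and>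
         (\<forall>t. 0 \<le> t \<and> t \<le> h \<longrightarrow> \<bar>U \<gamma> t\<bar> \<le> Cterm a (\<gamma> - 1) * G)" if gG: "\<gamma> \<in> Gams n \<alpha>" for \<gamma>
  proof -
    have ga: "\<alpha> \<le> \<gamma>" using Gams_ge[OF al gG] by simp
    have "\<delta> \<le> \<beta> + (\<gamma> - 1)" "\<gamma> - 1 > -1" using ga \<delta> al by auto
    from term_holder[OF a h \<beta> \<delta>(1,2) this G0 gc(3) gh]
    show ?thesis unfolding U_def Cterm_def by simp
  qed
  have wU: "w x = (\<Sum>\<gamma>\<in>Gams n \<alpha>. \<gamma> * c \<gamma> * U \<gamma> x)" for x
    by (cases "x = 0") (simp_all add: w_def U_def sum_distrib_right mult.assoc)
  have cb: "\<bar>\<gamma> * c \<gamma>\<bar> * Cterm a (\<gamma> - 1) \<le> \<gamma> * Kc * Cterm a (\<gamma> - 1)" if "\<gamma> \<in> Gams n \<alpha>" for \<gamma>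
  proof -
    have "\<gamma> > 0" using Gams_ge[OF al that] al by simp
    then have "\<bar>\<gamma> * c \<gamma>\<bar> \<le> \<gamma> * Kc" using cK that by (simp add: abs_mult mult_left_mono)
    then show ?thesis using Cterm_nonneg by (simp add: mult_right_mono)
  qed
  have wdiff: "\<bar>w y - w x\<bar> \<le> S0 * G * (y - x) powr \<delta>" if xy: "0 \<le> x" "x < y" "y \<le> h" for x y
  proof -
    have "\<bar>w y - w x\<bar> = \<bar>\<Sum>\<gamma>\<in>Gams n \<alpha>. \<gamma> * c \<gamma> * (U \<gamma> y - U \<gamma> x)\<bar>"
      by (simp add: wU sum_subtractf[symmetric] algebra_simps)
    also have "\<dots> \<le> (\<Sum>\<gamma>\<in>Gams n \<alpha>. \<bar>\<gamma> * c \<gamma>\<bar> * \<bar>U \<gamma> y - U \<gamma> x\<bar>)"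
      by (rule order_trans[OF sum_abs]) (simp add: abs_mult)
    also have "\<dots> \<le> (\<Sum>\<gamma>\<in>Gams n \<alpha>. \<gamma> * Kc * Cterm a (\<gamma> - 1) * (G * (y - x) powr \<delta>))"
    proof (rule sum_mono)
      fix \<gamma> assume gG: "\<gamma> \<in> Gams n \<alpha>"
      have "\<bar>U \<gamma> y - U \<gamma> x\<bar> \<le> Cterm a (\<gamma> - 1) * (G * (y - x) powr \<delta>)" using TH[OF gG] xy by (simp add: mult.assoc)
      then have "\<bar>\<gamma> * c \<gamma>\<bar> * \<bar>U \<gamma> y - U \<gamma> x\<bar> \<le> \<bar>\<gamma> * c \<gamma>\<bar> * (Cterm a (\<gamma> - 1) * (G * (y - x) powr \<delta>))"
        by (intro mult_left_mono) auto
      also have "\<dots> = (\<bar>\<gamma> * c \<gamma>\<bar> * Cterm a (\<gamma> - 1)) * (G * (y - x) powr \<delta>)" by (simp add: mult.assoc)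
      also have "\<dots> \<le> (\<gamma> * Kc * Cterm a (\<gamma> - 1)) * (G * (y - x) powr \<delta>)"
        by (rule mult_right_mono[OF cb[OF gG]]) (use G0 in simp)
      finally show "\<bar>\<gamma> * c \<gamma>\<bar> * \<bar>U \<gamma> y - U \<gamma> x\<bar> \<le> \<gamma> * Kc * Cterm a (\<gamma> - 1) * (G * (y - x) powr \<delta>)" .
    qed
    also have "\<dots> = S0 * G * (y - x) powr \<delta>" by (simp add: S0_def sum_distrib_right mult.assoc)
    finally show ?thesis .
  qed
  have wsup: "\<bar>w t\<bar> \<le> S0 * G" if t: "0 \<le> t" "t \<le> h" for t
  proof -
    have "\<bar>w t\<bar> \<le> (\<Sum>\<gamma>\<in>Gams n \<alpha>. \<bar>\<gamma> * c \<gamma>\<bar> * \<bar>U \<gamma> t\<bar>)"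
      unfolding wU by (rule order_trans[OF sum_abs]) (simp add: abs_mult)
    also have "\<dots> \<le> (\<Sum>\<gamma>\<in>Gams n \<alpha>. \<gamma> * Kc * Cterm a (\<gamma> - 1) * G)"
    proof (rule sum_mono)
      fix \<gamma> assume gG: "\<gamma> \<in> Gams n \<alpha>"
      have "\<bar>U \<gamma> t\<bar> \<le> Cterm a (\<gamma> - 1) * G" using TH[OF gG] t by simp
      then have "\<bar>\<gamma> * c \<gamma>\<bar> * \<bar>U \<gamma> t\<bar> \<le> \<bar>\<gamma> * c \<gamma>\<bar> * (Cterm a (\<gamma> - 1) * G)"
        by (intro mult_left_mono) auto
      also have "\<dots> = (\<bar>\<gamma> * c \<gamma>\<bar> * Cterm a (\<gamma> - 1)) * G" by (simp add: mult.assoc)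
      also have "\<dots> \<le> (\<gamma> * Kc * Cterm a (\<gamma> - 1)) * G"
        by (rule mult_right_mono[OF cb[OF gG]]) (use G0 in simp)
      finally show "\<bar>\<gamma> * c \<gamma>\<bar> * \<bar>U \<gamma> t\<bar> \<le> \<gamma> * Kc * Cterm a (\<gamma> - 1) * G" .
    qed
    also have "\<dots> = S0 * G" by (simp add: S0_def sum_distrib_right)
    finally show ?thesis .
  qed
  have S0: "S0 \<ge> 0" unfolding S0_def
    using Gams_ge[OF al] al Kc Cterm_nonneg by (intro sum_nonneg mult_nonneg_nonneg) force+
  have quots: "q \<le> S0 * G" if "q \<in> holder_quots \<delta> h w" for q
  proof -
    from that obtain x y where xy: "0 \<le> x" "x < y" "y \<le> h" "q = \<bar>w x - w y\<bar> / (y - x) powr \<delta>"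
      unfolding holder_quots_def by auto
    have p: "(y - x) powr \<delta> > 0" using xy by simp
    have "\<bar>w x - w y\<bar> \<le> S0 * G * (y - x) powr \<delta>" using wdiff[OF xy(1-3)] by (simp add: abs_minus_commute)
    then show ?thesis using xy(4) p by (simp add: divide_le_eq)
  qed
  have hq_ne: "holder_quots \<delta> h w \<noteq> {}" unfolding holder_quots_def using h by auto
  have cont: "continuous_on {0..h} w"
    by (rule holder_cont[OF \<delta>(1) mult_nonneg_nonneg[OF S0 G0]]) (use wdiff in blast)
  have mem: "w \<in> C0hol_van \<delta> h"
    unfolding C0hol_van_def C0hol_def using cont quots by (auto simp: w_def bdd_above_def)
  have n1: "(SUP t\<in>{0..h}. \<bar>w t\<bar>) \<le> S0 * G"
    using h wsup by (intro cSUP_least) auto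
  have n2: "holder_semi0 \<delta> h w \<le> S0 * G"
    unfolding holder_semi0_def using hq_ne quots by (intro cSup_least) auto
  have "norm0hol \<delta> h w \<le> S0 * G" using n1 n2 by (simp add: norm0hol_def)
  also have "\<dots> \<le> (1 + S0) * G" using G0 by (simp add: algebra_simps)
  finally show ?thesis using mem unfolding Let_def w_def[symmetric] S0_def[symmetric] G_def \<beta>_def \<delta>_def by simp
qed



theorem lemmaA2:
  fixes a \<alpha> M :: real and n :: nat
  assumes "0 < a" "0 < \<alpha>" "\<alpha> < 1" "0 < M" "0 < n"
  shows "\<exists>C>0. \<forall>b c0 f D c h (l::nat) g.
    0 < b \<and> Cn_partials n a b c0 f D \<and>
    (\<forall>\<beta>. set \<beta> \<subseteq> {1,2} \<and> length \<beta> \<le> n \<longrightarrow> (\<forall>z\<in>{0..a} \<times> {c0-b..c0+b}. \<bar>D \<beta> z\<bar> \<le> M)) \<and>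
    coeffs_cond n \<alpha> a c0 D c \<and>
    0 < h \<and> h \<le> a \<and> 0 < l \<and> real l * \<alpha> \<le> 1 \<and> 1 < real (l + 1) * \<alpha> \<and>
    g \<in> C0hol_van (real l * \<alpha>) h
    \<longrightarrow> (let w = (\<lambda>x. if x = 0 then 0 else (\<Sum>\<gamma>\<in>Gams n \<alpha>. \<gamma> * c \<gamma> * x powr (\<gamma> - 1)) * g x)
         in w \<in> C0hol_van (real (l + 1) * \<alpha> - 1) h \<and>
            norm0hol (real (l + 1) * \<alpha> - 1) h w \<le> C * norm0hol (real l * \<alpha>) h g)"
proof -
  have al: "0 < \<alpha>" "\<alpha> < 1" and a: "0 < a" using assms by auto
  obtain Kc where Kc: "Kc \<ge> 0" "\<forall>c. admc n \<alpha> a M c \<longrightarrow> (\<forall>g\<in>Gams n \<alpha>. \<bar>c g\<bar> \<le> Kc)"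
    using all_bound[OF al a, where n=n and M=M] by blast
  define S0 where "S0 = (\<Sum>\<gamma>\<in>Gams n \<alpha>. \<gamma> * Kc * Cterm a (\<gamma> - 1))"
  have S0: "S0 \<ge> 0" unfolding S0_def
    using Gams_ge[OF al] al Kc Cterm_nonneg by (intro sum_nonneg mult_nonneg_nonneg) force+
  show ?thesis
  proof (rule exI[of _ "1 + S0"], intro conjI allI impI)
    show "0 < 1 + S0" using S0 by simp
    fix b c0 f D c h l g
    assume H: "0 < b \<and> Cn_partials n a b c0 f D \<and>
      (\<forall>\<beta>. set \<beta> \<subseteq> {1,2} \<and> length \<beta> \<le> n \<longrightarrow> (\<forall>z\<in>{0..a} \<times> {c0-b..c0+b}. \<bar>D \<beta> z\<bar> \<le> M)) \<and>
      coeffs_cond n \<alpha> a c0 D c \<and>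
      0 < h \<and> h \<le> a \<and> 0 < l \<and> real l * \<alpha> \<le> 1 \<and> 1 < real (l + 1) * \<alpha> \<and>
      g \<in> C0hol_van (real l * \<alpha>) h"
    have DM: "\<forall>s<n. \<forall>\<beta>\<in>Lam s. \<bar>D \<beta> (0, c0)\<bar> \<le> M"
    proof (intro allI impI ballI)
      fix s \<beta> assume s: "s < n" and b: "\<beta> \<in> Lam s"
      have "set \<beta> \<subseteq> {1,2} \<and> length \<beta> \<le> n" using s b by (auto simp: Lam_def)
      moreover have "(0, c0) \<in> {0..a} \<times> {c0-b..c0+b}" using H a by auto
      ultimately show "\<bar>D \<beta> (0, c0)\<bar> \<le> M" using H by blast
    qed
    have "admc n \<alpha> a M c" unfolding admc_def using DM H by blast
    then have cK: "\<forall>\<gamma>\<in>Gams n \<alpha>. \<bar>c \<gamma>\<bar> \<le> Kc" using Kc by blast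
    show "let w = (\<lambda>x. if x = 0 then 0 else (\<Sum>\<gamma>\<in>Gams n \<alpha>. \<gamma> * c \<gamma> * x powr (\<gamma> - 1)) * g x)
         in w \<in> C0hol_van (real (l + 1) * \<alpha> - 1) h \<and>
            norm0hol (real (l + 1) * \<alpha> - 1) h w \<le> (1 + S0) * norm0hol (real l * \<alpha>) h g"
      unfolding S0_def
      by (rule w_result[OF al a _ _ _ _ _ _ Kc(1) cK]) (use H in auto)
  qed
qed

end
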